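(* Let $i\in\{1,2\}$ and consider $\mathrm{SU}(2)\times\mathbb{R}$ with the sub-Riemannian metric $d_i$ and its geodesics $\tilde\gamma_i(\alpha_1,\alpha_2,\alpha_3,\beta;t)$, $t\in\mathbb{R}$, as described in the context, with $\alpha_2\neq\pm1$. Then $\hat t>0$ is a conjugate time along $\tilde\gamma_i$ if and only if $$\sin\frac{w_i\hat t}{2}\Bigl(\sin\frac{w_i\hat t}{2}-\frac{w_i\hat t}{2}\cos\frac{w_i\hat t}{2}\Bigr)=0,$$ where $w_2=\sqrt{1-\alpha_2^2+\beta^2}$ and $w_1=\sqrt{1-\alpha_2^2+(\beta-\alpha_2)^2}$.
   Context: $\mathrm{SU}(2)\times\mathbb{R}$ is the group of matrices $(A,B,v)=\begin{pmatrix}A&B&0\\-\overline{B}&\overline{A}&0\\0&0&e^v\end{pmatrix}$, $A,B\in\mathbb{C}$, $|A|^2+|B|^2=1$, $v\in\mathbb{R}$, with identity $\mathrm{Id}$. Let $E_1=\tfrac12(e_{12}-e_{21})$, $E_2=\tfrac{i}{2}(e_{12}+e_{21})$, $E_3=\tfrac{i}{2}(e_{11}-e_{22})$, $E_4=e_{33}$ ($e_{jk}$ the $3\times3$ matrix units). Put $e_1=E_1$, $e_3=E_2$, $e_4=E_3$, and $e_2=E_4-E_3$ for $i=1$, $e_2=E_4$ for $i=2$. The metric $d_i$ is the left-invariant sub-Riemannian metric defined by the left-invariant distribution with value $\mathrm{span}(e_1,e_2,e_3)$ at $\mathrm{Id}$ and inner product making $e_1,e_2,e_3$ orthonormal. Its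 arclength-parametrized geodesics from $\mathrm{Id}$ are $\tilde\gamma_i(\alpha_1,\alpha_2,\alpha_3,\beta;t)=\exp(t(\alpha_1e_1+\alpha_2e_2+\alpha_3e_3+\beta e_4))\exp(-t\beta e_4)$ with $(\alpha_1,\alpha_2,\alpha_3)\in\mathbb{S}^2$, $\beta\in\mathbb{R}$; this defines the exponential map $\mathrm{Exp}_i:C\times\mathbb{R}_+\to\mathrm{SU}(2)\times\mathbb{R}$, $(\lambda,t)\mapsto\tilde\gamma_i(\lambda;t)$, where $C=\mathbb{S}^2\times\mathbb{R}\ni\lambda=(\alpha_1,\alpha_2,\alpha_3,\beta)$. A time $\hat t>0$ is a conjugate time along $\tilde\gamma_i(\lambda;\cdot)$ if the differential of $\mathrm{Exp}_i$ at $(\lambda,\hat t)$ is degenerate. *)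

theory Defs
  imports "HOL-Analysis.Analysis"
begin

text \<open>3x3 complex matrices; indices of type 3 are 1, 2, 3 (= 0 mod 3, distinct).\<close>

definition munit :: "3 \<Rightarrow> 3 \<Rightarrow> complex^3^3" where
  "munit j k = (\<chi> a b. if a = j \<and> b = k then 1 else 0)"

primrec matpow :: "complex^3^3 \<Rightarrow> nat \<Rightarrow> complex^3^3" where
  "matpow M 0 = mat 1"
| "matpow M (Suc n) = M ** matpow M n"

definition mexp :: "complex^3^3 \<Rightarrow> complex^3^3" where
  "mexp M = (\<Sum>n. (1 / fact n :: real) *\<^sub>R matpow M n)"

definition E1 :: "complex^3^3" where "E1 = mat (1/2 :: complex) ** (munit 1 2 - munit 2 1)"
definition E2 :: "complex^3^3" where "E2 = mat (\<i>/2) ** (munit 1 2 + munit 2 1)"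
definition E3 :: "complex^3^3" where "E3 = mat (\<i>/2) ** (munit 1 1 - munit 2 2)"
definition E4 :: "complex^3^3" where "E4 = munit 3 3"

definition ebasis :: "nat \<Rightarrow> nat \<Rightarrow> complex^3^3" where
  "ebasis i k = (if k = 1 then E1 else if k = 3 then E2 else if k = 4 then E3
                 else (if i = 1 then E4 - E3 else E4))"

text \<open>Geodesic gamma_i(alpha_1,alpha_2,alpha_3,beta; t), extended to all alpha in R^3
  (the exponential map Exp_i is its restriction to alpha in S^2).\<close>
definition geod :: "nat \<Rightarrow> real^3 \<Rightarrow> real \<Rightarrow> real \<Rightarrow> complex^3^3" where
  "geod i \<alpha> \<beta> t =
     mexp (t *\<^sub>R (\<alpha>$1 *\<^sub>R ebasis i 1 + \<alpha>$2 *\<^sub>R ebasis i 2 + \<alpha>$3 *\<^sub>R ebasis i 3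
                  + \<beta> *\<^sub>R ebasis i 4))
     ** mexp ((- t * \<beta>) *\<^sub>R ebasis i 4)"

text \<open>t is a conjugate time along gamma_i(lambda; .) iff the differential of
  Exp_i : S^2 x R x R_+ -> SU(2) x R at (lambda, t) is degenerate, i.e. it kills a
  nonzero tangent vector (xi, b, s) with xi orthogonal to alpha (tangent to S^2).
  The differential is computed in the ambient matrix space (SU(2)xR is an embedded
  submanifold).\<close>
definition conjugate_time :: "nat \<Rightarrow> real^3 \<Rightarrow> real \<Rightarrow> real \<Rightarrow> bool" where
  "conjugate_time i \<alpha> \<beta> t \<longleftrightarrow>
     (\<exists>D. ((\<lambda>(a, b, s). geod i a b s) has_derivative D) (at (\<alpha>, \<beta>, t)) \<and>
          (\<exists>\<xi> b s. \<xi> \<bullet> \<alpha> = 0 \<and> (\<xi>, b, s) \<noteq> 0 \<and> D (\<xi>, b, s) = 0))"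

definition wfreq :: "nat \<Rightarrow> real^3 \<Rightarrow> real \<Rightarrow> real" where
  "wfreq i \<alpha> \<beta> = (if i = 2 then sqrt (1 - (\<alpha>$2)^2 + \<beta>^2)
                    else sqrt (1 - (\<alpha>$2)^2 + (\<beta> - \<alpha>$2)^2))"

end

theory Submission
  imports Defs
begin
lemma three_neq[simp]: "(1::3) \<noteq> 2" "(1::3) \<noteq> 3" "(2::3) \<noteq> 3" "(2::3) \<noteq> 1" "(3::3) \<noteq> 1" "(3::3) \<noteq> 2"
  by simp_all

definition mk :: "complex \<Rightarrow> complex \<Rightarrow> complex \<Rightarrow> complex \<Rightarrow> complex \<Rightarrow> complex^3^3" where
  "mk p q r u e = (\<chi> a b. if a = 1 \<and> b = 1 then p else if a = 1 \<and> b = 2 then q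
      else if a = 2 \<and> b = 1 then r else if a = 2 \<and> b = 2 then u else if a = 3 \<and> b = 3 then e else 0)"

lemma mk_nth[simp]:
  "mk p q r u e $ 1 $ 1 = p" "mk p q r u e $ 1 $ 2 = q" "mk p q r u e $ 1 $ 3 = 0"
  "mk p q r u e $ 2 $ 1 = r" "mk p q r u e $ 2 $ 2 = u" "mk p q r u e $ 2 $ 3 = 0"
  "mk p q r u e $ 3 $ 1 = 0" "mk p q r u e $ 3 $ 2 = 0" "mk p q r u e $ 3 $ 3 = e"
  by (simp_all add: mk_def)

lemma mat_eqI3:
  fixes A B :: "'a^3^3"
  assumes "A$1$1 = B$1$1" "A$1$2 = B$1$2" "A$1$3 = B$1$3"
     "A$2$1 = B$2$1" "A$2$2 = B$2$2" "A$2$3 = B$2$3"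
     "A$3$1 = B$3$1" "A$3$2 = B$3$2" "A$3$3 = B$3$3"
  shows "A = B"
  using assms by (simp add: vec_eq_iff forall_3)

lemma mk_mult: "mk p q r u e ** mk p' q' r' u' e' =
   mk (p*p' + q*r') (p*q' + q*u') (r*p' + u*r') (r*q' + u*u') (e*e')"
  by (rule mat_eqI3) (simp_all add: matrix_matrix_mult_def sum_3)

lemma mk_add: "mk p q r u e + mk p' q' r' u' e' = mk (p+p') (q+q') (r+r') (u+u') (e+e')"
  by (rule mat_eqI3) simp_all

lemma mk_diff: "mk p q r u e - mk p' q' r' u' e' = mk (p-p') (q-q') (r-r') (u-u') (e-e')"
  by (rule mat_eqI3) simp_all

lemma mk_scaleR: "x *\<^sub>R mk p q r u e = mk (x *\<^sub>R p) (x *\<^sub>R q) (x *\<^sub>R r) (x *\<^sub>R u) (x *\<^sub>R e)"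
  by (rule mat_eqI3) simp_all

lemma mat1_mk: "mat 1 = mk 1 0 0 1 1"
  by (rule mat_eqI3) (simp_all add: mat_def)

lemma E1_mk: "E1 = mk 0 (1/2) (-1/2) 0 0"
  by (rule mat_eqI3) (simp_all add: E1_def munit_def matrix_matrix_mult_def sum_3 mat_def)
lemma E2_mk: "E2 = mk 0 (\<i>/2) (\<i>/2) 0 0"
  by (rule mat_eqI3) (simp_all add: E2_def munit_def matrix_matrix_mult_def sum_3 mat_def)
lemma E3_mk: "E3 = mk (\<i>/2) 0 0 (-\<i>/2) 0"
  by (rule mat_eqI3) (simp_all add: E3_def munit_def matrix_matrix_mult_def sum_3 mat_def)
lemma E4_mk: "E4 = mk 0 0 0 0 1"
  by (rule mat_eqI3) (simp_all add: E4_def munit_def)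

definition pp :: "real \<Rightarrow> nat \<Rightarrow> real" where
  "pp K n = (if even n then K ^ (n div 2) else 0)"
definition qq :: "real \<Rightarrow> nat \<Rightarrow> real" where
  "qq K n = (if even n then 0 else K ^ (n div 2))"

lemma pp_Suc: "pp K (Suc n) = K * qq K n"
  by (auto simp: pp_def qq_def elim!: oddE)
lemma qq_Suc: "qq K (Suc n) = pp K n"
  by (auto simp: pp_def qq_def elim!: evenE)

lemma mk_eq_iff: "mk p q r u e = mk p' q' r' u' e' \<longleftrightarrow> p = p' \<and> q = q' \<and> r = r' \<and> u = u' \<and> e = e'"
  by (metis mk_nth)

lemma matpow_mk:
  assumes "m11 * m11 + m12 * m21 = of_real K"
  shows "matpow (mk m11 m12 m21 (-m11) e) n =
    mk (of_real (pp K n) + of_real (qq K n) * m11) (of_real (qq K n) * m12)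
       (of_real (qq K n) * m21) (of_real (pp K n) - of_real (qq K n) * m11) (e ^ n)"
proof (induction n)
  case 0
  then show ?case by (simp add: mat1_mk pp_def qq_def)
next
  case (Suc n)
  show ?case
    unfolding matpow.simps Suc mk_mult pp_Suc qq_Suc of_real_mult assms[symmetric] mk_eq_iff
    by (simp add: algebra_simps)
qed

lemma sums_matI:
  fixes f :: "nat \<Rightarrow> 'a::real_normed_vector^3^3"
  assumes "\<And>a b. (\<lambda>n. f n $ a $ b) sums (L $ a $ b)"
  shows "f sums L"
proof -
  have "(\<lambda>N. \<chi> a. \<chi> b. \<Sum>k<N. f k $ a $ b) \<longlonglongrightarrow> (\<chi> a. \<chi> b. L $ a $ b)"
    using assms unfolding sums_def by (intro tendsto_vec_lambda)
  moreover have "(\<lambda>N. \<chi> a. \<chi> b. \<Sum>k<N. f k $ a $ b) = (\<lambda>N. \<Sum>k<N. f k)"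
    by (simp add: fun_eq_iff vec_eq_iff)
  moreover have "(\<chi> a. \<chi> b. L $ a $ b) = L"
    by (simp add: vec_eq_iff)
  ultimately show ?thesis unfolding sums_def by simp
qed

definition sincw :: "real \<Rightarrow> real" where
  "sincw w = (if w = 0 then 1 else sin w / w)"

lemma sincw_mult: "sincw w * w = sin w"
  by (simp add: sincw_def)

lemma pp_sums: "(\<lambda>n. (1 / fact n) * pp (-(w^2)) n) sums cos w"
proof -
  have "(\<lambda>n. (1 / fact n) * pp (-(w^2)) n) = (\<lambda>n. cos_coeff n *\<^sub>R w^n)"
  proof
    fix n :: nat
    show "(1 / fact n) * pp (-(w^2)) n = cos_coeff n *\<^sub>R w^n"
    proof (cases "even n")
      case True
      then obtain k where k: "n = 2 * k" by (auto elim!: evenE)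
      have 1: "n div 2 = k" using k by auto
      have 2: "w ^ n = (w^2)^k" using k by (simp add: power_mult)
      have 3: "(-(w^2))^k = (-1)^k * (w^2)^k" by (rule power_minus)
      show ?thesis
        using True by (simp add: pp_def cos_coeff_def 1 2 3)
    next
      case False
      then show ?thesis by (simp add: pp_def cos_coeff_def)
    qed
  qed
  then show ?thesis using cos_converges[of w] by simp
qed

lemma qq_sums: "(\<lambda>n. (1 / fact n) * qq (-(w^2)) n) sums sincw w"
proof (cases "w = 0")
  case True
  have "(\<lambda>n. (1 / fact n) * qq (-(w^2)) n) = (\<lambda>n. if n = 1 then 1 else 0)"
  proof
    fix n :: nat
    show "(1 / fact n) * qq (-(w^2)) n = (if n = 1 then 1 else 0)"
      using True by (auto simp: qq_def elim!: oddE)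
  qed
  then show ?thesis using sums_single[of 1 "\<lambda>_. 1::real"] True by (simp add: sincw_def)
next
  case False
  have "(\<lambda>n. (1 / fact n) * qq (-(w^2)) n) = (\<lambda>n. (sin_coeff n *\<^sub>R w^n) / w)"
  proof
    fix n :: nat
    show "(1 / fact n) * qq (-(w^2)) n = (sin_coeff n *\<^sub>R w^n) / w"
    proof (cases "even n")
      case False
      then obtain k where k: "n = Suc (2 * k)" by (auto elim!: oddE)
      have 1: "(n - Suc 0) div 2 = k" "n div 2 = k" using k by auto
      have 2: "w ^ n / w = (w^2)^k" using k \<open>w \<noteq> 0\<close> by (simp add: power_mult)
      have 3: "(-(w^2))^k = (-1)^k * (w^2)^k" by (rule power_minus)
      have "(sin_coeff n *\<^sub>R w^n) / w = ((-1)^k / fact n) * (w ^ n / w)"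
        using False by (simp add: sin_coeff_def 1)
      also have "\<dots> = (1 / fact n) * qq (-(w^2)) n"
        using False by (simp add: qq_def 1 2 3)
      finally show ?thesis by simp
    next
      case True
      then show ?thesis by (simp add: qq_def sin_coeff_def)
    qed
  qed
  then show ?thesis using sums_divide[OF sin_converges[of w], of w] False by (simp add: sincw_def)
qed

lemma mexp_mk:
  assumes "m11 * m11 + m12 * m21 = of_real (-(w^2))"
  shows "mexp (mk m11 m12 m21 (-m11) e) =
    mk (of_real (cos w) + of_real (sincw w) * m11) (of_real (sincw w) * m12)
       (of_real (sincw w) * m21) (of_real (cos w) - of_real (sincw w) * m11) (exp e)"
proof -
  let ?L = "mk (of_real (cos w) + of_real (sincw w) * m11) (of_real (sincw w) * m12)
       (of_real (sincw w) * m21) (of_real (cos w) - of_real (sincw w) * m11) (exp e)"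
  let ?f = "\<lambda>n. (1 / fact n :: real) *\<^sub>R matpow (mk m11 m12 m21 (-m11) e) n"
  have P: "(\<lambda>n. complex_of_real ((1 / fact n) * pp (-(w^2)) n)) sums of_real (cos w)"
    by (rule sums_of_real[OF pp_sums])
  have Q: "(\<lambda>n. complex_of_real ((1 / fact n) * qq (-(w^2)) n)) sums of_real (sincw w)"
    by (rule sums_of_real[OF qq_sums])
  have E: "(\<lambda>n. e ^ n /\<^sub>R fact n) sums exp e" by (rule exp_converges)
  have f: "?f n = mk (complex_of_real ((1 / fact n) * pp (-(w^2)) n) + complex_of_real ((1 / fact n) * qq (-(w^2)) n) * m11)
      (complex_of_real ((1 / fact n) * qq (-(w^2)) n) * m12)
      (complex_of_real ((1 / fact n) * qq (-(w^2)) n) * m21)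
      (complex_of_real ((1 / fact n) * pp (-(w^2)) n) - complex_of_real ((1 / fact n) * qq (-(w^2)) n) * m11)
      (e ^ n /\<^sub>R fact n)" for n
    unfolding matpow_mk[OF assms] mk_scaleR mk_eq_iff
    by (simp add: scaleR_conv_of_real algebra_simps divide_inverse)
  have "?f sums ?L"
  proof (rule sums_matI)
    fix a b :: 3
    have z: "(\<lambda>n. 0::complex) sums 0" by simp
    show "(\<lambda>n. ?f n $ a $ b) sums (?L $ a $ b)"
      using exhaust_3[of a] exhaust_3[of b]
      by (auto simp only: f mk_nth intro!: sums_add sums_diff sums_mult2 P Q E z)
  qed
  then show ?thesis unfolding mexp_def by (rule sums_unique[symmetric])
qed

definition cc :: "nat \<Rightarrow> real^3 \<Rightarrow> real \<Rightarrow> real" where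
  "cc i a b = (if i = 1 then b - a$2 else b)"

definition Gm :: "real \<Rightarrow> real \<Rightarrow> real \<Rightarrow> real \<Rightarrow> real \<Rightarrow> real \<Rightarrow> complex^3^3" where
  "Gm y1 y2 c a2 b s =
    mk ((of_real (cos (sqrt (y1^2 + y2^2 + c^2) * s / 2)) + \<i> * of_real (c * (sin (sqrt (y1^2 + y2^2 + c^2) * s / 2) / sqrt (y1^2 + y2^2 + c^2)))) * (of_real (cos (s * b / 2)) - \<i> * of_real (sin (s * b / 2))))
       ((of_real y1 + \<i> * of_real y2) * of_real (sin (sqrt (y1^2 + y2^2 + c^2) * s / 2) / sqrt (y1^2 + y2^2 + c^2)) * (of_real (cos (s * b / 2)) + \<i> * of_real (sin (s * b / 2))))
       ((- of_real y1 + \<i> * of_real y2) * of_real (sin (sqrt (y1^2 + y2^2 + c^2) * s / 2) / sqrt (y1^2 + y2^2 + c^2)) * (of_real (cos (s * b / 2)) - \<i> * of_real (sin (s * b / 2))))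
       ((of_real (cos (sqrt (y1^2 + y2^2 + c^2) * s / 2)) - \<i> * of_real (c * (sin (sqrt (y1^2 + y2^2 + c^2) * s / 2) / sqrt (y1^2 + y2^2 + c^2)))) * (of_real (cos (s * b / 2)) + \<i> * of_real (sin (s * b / 2))))
       (of_real (exp (s * a2)))"

lemma X_mk: "s *\<^sub>R (a$1 *\<^sub>R ebasis i 1 + a$2 *\<^sub>R ebasis i 2 + a$3 *\<^sub>R ebasis i 3 + b *\<^sub>R ebasis i 4)
   = mk (\<i> * of_real (s * cc i a b / 2)) (of_real (s/2) * (of_real (a$1) + \<i> * of_real (a$3)))
        (of_real (s/2) * (- of_real (a$1) + \<i> * of_real (a$3))) (- (\<i> * of_real (s * cc i a b / 2))) (of_real (s * a$2))"
  by (cases "i = 1"; simp add: ebasis_def E1_mk E2_mk E3_mk E4_mk mk_add mk_diff mk_scaleR;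
      simp add: mk_eq_iff cc_def scaleR_conv_of_real complex_eq_iff field_simps)

lemma Y_mk: "(- s * b) *\<^sub>R ebasis i 4 = mk (\<i> * of_real (-(s * b / 2))) 0 0 (- (\<i> * of_real (-(s * b / 2)))) 0"
  by (simp add: ebasis_def E3_mk mk_scaleR; simp add: mk_eq_iff scaleR_conv_of_real algebra_simps)

lemma geod_closed:
  assumes s: "s > 0" and W: "0 < (a$1)^2 + (a$3)^2 + (cc i a b)^2"
  shows "geod i a b s = Gm (a$1) (a$3) (cc i a b) (a$2) b s"
proof -
  define c where "c = cc i a b"
  define W where "W = sqrt ((a$1)^2 + (a$3)^2 + c^2)"
  have Wpos: "W > 0" using W by (simp add: W_def c_def)
  have W2: "W^2 = (a$1)^2 + (a$3)^2 + c^2" using W by (simp add: W_def c_def)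
  have W2': "W * W = (a$1) * (a$1) + (a$3) * (a$3) + c * c" using W2 by (simp add: power2_eq_square)
  define th where "th = W * s / 2"
  have thnz: "th \<noteq> 0" using Wpos s by (simp add: th_def)
  have th2: "th * th = s * s * ((a$1) * (a$1) + (a$3) * (a$3) + c * c) / 4"
  proof -
    have "th * th = (W * W) * (s * s) / 4" by (simp add: th_def)
    then show ?thesis by (simp add: W2')
  qed
  have K1: "\<i> * of_real (s * c / 2) * (\<i> * of_real (s * c / 2)) +
      of_real (s/2) * (of_real (a$1) + \<i> * of_real (a$3)) * (of_real (s/2) * (- of_real (a$1) + \<i> * of_real (a$3)))
      = complex_of_real (- (th^2))"
    by (simp add: complex_eq_iff th2 power2_eq_square algebra_simps)
  have K2: "\<i> * of_real (-(s * b / 2)) * (\<i> * of_real (-(s * b / 2))) + 0 * 0 = complex_of_real (-((s*b/2)^2))"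
    by (simp add: complex_eq_iff power2_eq_square)
  have sw: "sincw th = sin th / th" using thnz by (simp add: sincw_def)
  have sw2: "complex_of_real (sincw (s * b / 2)) * (\<i> * complex_of_real (- (s * b / 2))) = - \<i> * of_real (sin (s*b/2))"
    using sincw_mult[of "s*b/2"] by (simp add: complex_eq_iff)
  have swth: "sincw th = 2 * sin th / (W * s)" using sw thnz Wpos s by (simp add: th_def field_simps)
  have ex: "exp (complex_of_real s * complex_of_real (a$2)) = of_real (exp (s * a$2))"
    by (metis exp_of_real of_real_mult)
  show ?thesis
    unfolding geod_def X_mk Y_mk c_def[symmetric]
    unfolding mexp_mk[OF K1] mexp_mk[OF K2] sw2
    unfolding mk_mult Gm_def mk_eq_iff c_def[symmetric] W_def[symmetric] th_def[symmetric]
    using Wpos thnz s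
    by (simp add: swth ex complex_eq_iff field_simps)
qed

lemma has_derivative_vec_lambda:
  fixes f :: "'n::finite \<Rightarrow> 'a::euclidean_space \<Rightarrow> 'b::real_normed_vector"
  assumes "\<And>j. (f j has_derivative f' j) (at x)"
  shows "((\<lambda>y. \<chi> j. f j y) has_derivative (\<lambda>h. \<chi> j. f' j h)) (at x)"
proof -
  have bl: "bounded_linear (f' j)" for j using assms has_derivative_bounded_linear by blast
  have "linear (\<lambda>h. \<chi> j. f' j h)"
    by (rule linearI) (simp_all add: vec_eq_iff linear_add linear_scale bl bounded_linear.linear)
  then have "bounded_linear (\<lambda>h. \<chi> j. f' j h)" by (simp add: linear_conv_bounded_linear)
  moreover have "((\<lambda>y. \<chi> j. ((f j y - f j x) - f' j (y - x)) /\<^sub>R norm (y - x)) \<longlongrightarrow> (\<chi> j. 0)) (at x)"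
    using assms unfolding has_derivative_at_within by (intro tendsto_vec_lambda) blast
  moreover have "(\<lambda>y. ((\<chi> j. f j y) - (\<chi> j. f j x) - (\<chi> j. f' j (y - x))) /\<^sub>R norm (y - x))
     = (\<lambda>y. \<chi> j. ((f j y - f j x) - f' j (y - x)) /\<^sub>R norm (y - x))"
    by (simp add: fun_eq_iff vec_eq_iff)
  moreover have "(\<chi> j. 0) = (0 :: 'b^'n)" by (simp add: vec_eq_iff)
  ultimately show ?thesis unfolding has_derivative_at_within by simp
qed

lemma ex_deriv_vec:
  fixes f :: "'a::euclidean_space \<Rightarrow> 'b::real_normed_vector^'n::finite"
  assumes "\<And>j. \<exists>D. ((\<lambda>y. f y $ j) has_derivative D) (at x)"
  shows "\<exists>D. (f has_derivative D) (at x)"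
proof -
  obtain D where D: "\<And>j. ((\<lambda>y. f y $ j) has_derivative D j) (at x)"
    using assms by metis
  have "((\<lambda>y. \<chi> j. f y $ j) has_derivative (\<lambda>h. \<chi> j. D j h)) (at x)"
    by (rule has_derivative_vec_lambda[OF D])
  then show ?thesis by auto
qed

definition Gf :: "nat \<Rightarrow> (real^3) \<times> real \<times> real \<Rightarrow> complex^3^3" where
  "Gf i x = Gm (fst x $ 1) (fst x $ 3) (cc i (fst x) (fst (snd x))) (fst x $ 2) (fst (snd x)) (snd (snd x))"

definition UU :: "nat \<Rightarrow> ((real^3) \<times> real \<times> real) set" where
  "UU i = {x. 0 < snd (snd x) \<and> 0 < (fst x $ 1)^2 + (fst x $ 3)^2 + (cc i (fst x) (fst (snd x)))^2}"

lemma open_UU: "open (UU i)"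
  unfolding UU_def cc_def
  by (cases "i = 1") (auto intro!: open_Collect_conj open_Collect_less continuous_intros)

lemma cc_deriv: "((\<lambda>y::(real^3)\<times>real\<times>real. cc i (fst y) (fst (snd y))) has_derivative (\<lambda>h. cc i (fst h) (fst (snd h)))) (at x)"
  unfolding cc_def
  by (cases "i = 1") (auto intro!: derivative_eq_intros bounded_linear.has_derivative[OF bounded_linear_vec_nth])

lemma Gm_entries_deriv:
  fixes Y1 Y2 C A2 B S :: "'a::real_normed_vector \<Rightarrow> real"
  assumes "(Y1 has_derivative Y1') (at x)" "(Y2 has_derivative Y2') (at x)" "(C has_derivative C') (at x)"
    "(A2 has_derivative A2') (at x)" "(B has_derivative B') (at x)" "(S has_derivative S') (at x)"
    and pos: "0 < (Y1 x)^2 + (Y2 x)^2 + (C x)^2"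
  shows "\<exists>D. ((\<lambda>y. Gm (Y1 y) (Y2 y) (C y) (A2 y) (B y) (S y) $ a $ b) has_derivative D) (at x)"
proof -
  have sq: "0 < sqrt ((Y1 x)^2 + (Y2 x)^2 + (C x)^2)" using pos by simp
  have "a = 1 \<or> a = 2 \<or> a = 3" "b = 1 \<or> b = 2 \<or> b = 3" by (rule exhaust_3)+
  then consider "a = 1" "b = 1" | "a = 1" "b = 2" | "a = 2" "b = 1" | "a = 2" "b = 2" | "a = 3" "b = 3"
    | "(a = 1 \<or> a = 2) \<and> b = 3 \<or> a = 3 \<and> (b = 1 \<or> b = 2)" by blast
  then show ?thesis
  proof cases
    case 1 show ?thesis unfolding 1 Gm_def mk_nth
      apply (rule exI)
      using pos sq by (auto intro!: derivative_eq_intros assms)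
  next
    case 2 show ?thesis unfolding 2 Gm_def mk_nth
      apply (rule exI)
      using pos sq by (auto intro!: derivative_eq_intros assms)
  next
    case 3 show ?thesis unfolding 3 Gm_def mk_nth
      apply (rule exI)
      using pos sq by (auto intro!: derivative_eq_intros assms)
  next
    case 4 show ?thesis unfolding 4 Gm_def mk_nth
      apply (rule exI)
      using pos sq by (auto intro!: derivative_eq_intros assms)
  next
    case 5 show ?thesis unfolding 5 Gm_def mk_nth
      apply (rule exI)
      using pos sq by (auto intro!: derivative_eq_intros assms)
  next
    case 6 then show ?thesis unfolding Gm_def by (auto intro!: exI derivative_intros)
  qed
qed

lemma Gf_deriv:
  assumes "x \<in> UU i"
  shows "\<exists>D. (Gf i has_derivative D) (at x)"
proof (rule ex_deriv_vec)
  fix a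
  show "\<exists>D. ((\<lambda>y. Gf i y $ a) has_derivative D) (at x)"
  proof (rule ex_deriv_vec)
    fix b
    have pos: "0 < (fst x $ 1)^2 + (fst x $ 3)^2 + (cc i (fst x) (fst (snd x)))^2"
      using assms by (simp add: UU_def)
    show "\<exists>D. ((\<lambda>y. Gf i y $ a $ b) has_derivative D) (at x)"
      unfolding Gf_def
      using pos
      by (intro Gm_entries_deriv)
         (auto intro!: cc_deriv derivative_intros bounded_linear.has_derivative[OF bounded_linear_vec_nth])
  qed
qed

definition "WW y1 y2 c = sqrt (y1^2 + y2^2 + c^2)"
definition "WD y1 y2 c y1' y2' c' = (y1*y1' + y2*y2' + c*c') / WW y1 y2 c"
definition "TH y1 y2 c s = WW y1 y2 c * s / 2"
definition "THD y1 y2 c s y1' y2' c' s' = (WD y1 y2 c y1' y2' c' * s + WW y1 y2 c * s') / 2"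
definition "SS y1 y2 c s = sin (TH y1 y2 c s) / WW y1 y2 c"
definition "SD y1 y2 c s y1' y2' c' s' =
   (cos (TH y1 y2 c s) * THD y1 y2 c s y1' y2' c' s' * WW y1 y2 c - sin (TH y1 y2 c s) * WD y1 y2 c y1' y2' c') / (WW y1 y2 c)^2"
definition "PH b s = s * b / 2"
definition "PHD b s b' s' = (s' * b + s * b') / 2"
definition "RR1 y1 y2 c b s y1' y2' c' b' s' =
   - sin (TH y1 y2 c s) * THD y1 y2 c s y1' y2' c' s' + c * SS y1 y2 c s * PHD b s b' s'"
definition "RR2 y1 y2 c b s y1' y2' c' b' s' =
   c' * SS y1 y2 c s + c * SD y1 y2 c s y1' y2' c' s' - cos (TH y1 y2 c s) * PHD b s b' s'"
definition "RR3 y1 y2 c b s y1' y2' c' b' s' =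
   SD y1 y2 c s y1' y2' c' s' * y1 + SS y1 y2 c s * y1' - SS y1 y2 c s * y2 * PHD b s b' s'"
definition "RR4 y1 y2 c b s y1' y2' c' b' s' =
   SD y1 y2 c s y1' y2' c' s' * y2 + SS y1 y2 c s * y2' + SS y1 y2 c s * y1 * PHD b s b' s'"

lemma Gm_line_deriv:
  fixes Y1 Y2 C A2 B S :: "real \<Rightarrow> real"
  assumes d1: "(Y1 has_real_derivative y1') (at h0)" and d2: "(Y2 has_real_derivative y2') (at h0)"
    and d3: "(C has_real_derivative c') (at h0)" and d4: "(A2 has_real_derivative a2') (at h0)"
    and d5: "(B has_real_derivative b') (at h0)" and d6: "(S has_real_derivative s') (at h0)"
    and pos: "0 < (Y1 h0)^2 + (Y2 h0)^2 + (C h0)^2"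
  shows "((\<lambda>h. Gm (Y1 h) (Y2 h) (C h) (A2 h) (B h) (S h) $ 1 $ 1) has_vector_derivative
           (of_real (RR1 (Y1 h0) (Y2 h0) (C h0) (B h0) (S h0) y1' y2' c' b' s') + \<i> * of_real (RR2 (Y1 h0) (Y2 h0) (C h0) (B h0) (S h0) y1' y2' c' b' s'))
           * (of_real (cos (PH (B h0) (S h0))) - \<i> * of_real (sin (PH (B h0) (S h0))))) (at h0)"
   and "((\<lambda>h. Gm (Y1 h) (Y2 h) (C h) (A2 h) (B h) (S h) $ 1 $ 2) has_vector_derivative
           (of_real (RR3 (Y1 h0) (Y2 h0) (C h0) (B h0) (S h0) y1' y2' c' b' s') + \<i> * of_real (RR4 (Y1 h0) (Y2 h0) (C h0) (B h0) (S h0) y1' y2' c' b' s'))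
           * (of_real (cos (PH (B h0) (S h0))) + \<i> * of_real (sin (PH (B h0) (S h0))))) (at h0)"
   and "((\<lambda>h. Gm (Y1 h) (Y2 h) (C h) (A2 h) (B h) (S h) $ 2 $ 1) has_vector_derivative
           (- of_real (RR3 (Y1 h0) (Y2 h0) (C h0) (B h0) (S h0) y1' y2' c' b' s') + \<i> * of_real (RR4 (Y1 h0) (Y2 h0) (C h0) (B h0) (S h0) y1' y2' c' b' s'))
           * (of_real (cos (PH (B h0) (S h0))) - \<i> * of_real (sin (PH (B h0) (S h0))))) (at h0)"
   and "((\<lambda>h. Gm (Y1 h) (Y2 h) (C h) (A2 h) (B h) (S h) $ 2 $ 2) has_vector_derivative
           (of_real (RR1 (Y1 h0) (Y2 h0) (C h0) (B h0) (S h0) y1' y2' c' b' s') - \<i> * of_real (RR2 (Y1 h0) (Y2 h0) (C h0) (B h0) (S h0) y1' y2' c' b' s'))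
           * (of_real (cos (PH (B h0) (S h0))) + \<i> * of_real (sin (PH (B h0) (S h0))))) (at h0)"
   and "((\<lambda>h. Gm (Y1 h) (Y2 h) (C h) (A2 h) (B h) (S h) $ 3 $ 3) has_vector_derivative
           of_real (exp (S h0 * A2 h0) * (s' * A2 h0 + S h0 * a2'))) (at h0)"
proof -
  define Wf where "Wf h = sqrt ((Y1 h)^2 + (Y2 h)^2 + (C h)^2)" for h
  define Tf where "Tf h = Wf h * S h / 2" for h
  define Sf where "Sf h = sin (Tf h) / Wf h" for h
  define Pf where "Pf h = S h * B h / 2" for h
  let ?W = "WW (Y1 h0) (Y2 h0) (C h0)"
  let ?WD = "WD (Y1 h0) (Y2 h0) (C h0) y1' y2' c'"
  let ?TH = "TH (Y1 h0) (Y2 h0) (C h0) (S h0)"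
  let ?THD = "THD (Y1 h0) (Y2 h0) (C h0) (S h0) y1' y2' c' s'"
  let ?SS = "SS (Y1 h0) (Y2 h0) (C h0) (S h0)"
  let ?SD = "SD (Y1 h0) (Y2 h0) (C h0) (S h0) y1' y2' c' s'"
  let ?PH = "PH (B h0) (S h0)"
  let ?PHD = "PHD (B h0) (S h0) b' s'"
  have Wpos: "0 < ?W" using pos by (simp add: WW_def)
  have W0: "Wf h0 = ?W" by (simp add: Wf_def WW_def)
  have T0: "Tf h0 = ?TH" by (simp add: Tf_def TH_def W0)
  have S0: "Sf h0 = ?SS" by (simp add: Sf_def SS_def T0 W0)
  have P0: "Pf h0 = ?PH" by (simp add: Pf_def PH_def mult.commute)
  have dsum: "((\<lambda>h. (Y1 h)^2 + (Y2 h)^2 + (C h)^2) has_real_derivative (2*Y1 h0*y1' + 2*Y2 h0*y2' + 2*C h0*c')) (at h0)"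
    by (auto intro!: derivative_eq_intros d1 d2 d3)
  have dW: "(Wf has_real_derivative ?WD) (at h0)"
    unfolding Wf_def[abs_def]
    apply (rule DERIV_cong[OF DERIV_chain2[OF DERIV_real_sqrt[OF pos] dsum]])
    using Wpos by (simp add: WD_def WW_def field_simps)
  have dT: "(Tf has_real_derivative ?THD) (at h0)"
    unfolding Tf_def[abs_def]
    by (auto intro!: derivative_eq_intros dW d6 simp: THD_def W0 field_simps)
  have dS: "(Sf has_real_derivative ?SD) (at h0)"
    unfolding Sf_def[abs_def]
    using Wpos by (auto intro!: derivative_eq_intros dW dT simp: SD_def W0 T0 field_simps power2_eq_square)
  have dP: "(Pf has_real_derivative ?PHD) (at h0)"
    unfolding Pf_def[abs_def]
    by (auto intro!: derivative_eq_intros d5 d6 simp: PHD_def field_simps)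
  have e11: "(\<lambda>h. Gm (Y1 h) (Y2 h) (C h) (A2 h) (B h) (S h) $ 1 $ 1) =
     (\<lambda>h. (of_real (cos (Tf h)) + \<i> * of_real (C h * Sf h)) * (of_real (cos (Pf h)) - \<i> * of_real (sin (Pf h))))"
    by (simp add: fun_eq_iff Gm_def Tf_def Wf_def Sf_def Pf_def)
  have e12: "(\<lambda>h. Gm (Y1 h) (Y2 h) (C h) (A2 h) (B h) (S h) $ 1 $ 2) =
     (\<lambda>h. (of_real (Y1 h) + \<i> * of_real (Y2 h)) * of_real (Sf h) * (of_real (cos (Pf h)) + \<i> * of_real (sin (Pf h))))"
    by (simp add: fun_eq_iff Gm_def Tf_def Wf_def Sf_def Pf_def)
  have e21: "(\<lambda>h. Gm (Y1 h) (Y2 h) (C h) (A2 h) (B h) (S h) $ 2 $ 1) =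
     (\<lambda>h. (- of_real (Y1 h) + \<i> * of_real (Y2 h)) * of_real (Sf h) * (of_real (cos (Pf h)) - \<i> * of_real (sin (Pf h))))"
    by (simp add: fun_eq_iff Gm_def Tf_def Wf_def Sf_def Pf_def)
  have e22: "(\<lambda>h. Gm (Y1 h) (Y2 h) (C h) (A2 h) (B h) (S h) $ 2 $ 2) =
     (\<lambda>h. (of_real (cos (Tf h)) - \<i> * of_real (C h * Sf h)) * (of_real (cos (Pf h)) + \<i> * of_real (sin (Pf h))))"
    by (simp add: fun_eq_iff Gm_def Tf_def Wf_def Sf_def Pf_def)
  have e33: "(\<lambda>h. Gm (Y1 h) (Y2 h) (C h) (A2 h) (B h) (S h) $ 3 $ 3) = (\<lambda>h. of_real (exp (S h * A2 h)))"
    by (simp add: fun_eq_iff Gm_def)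
  show "((\<lambda>h. Gm (Y1 h) (Y2 h) (C h) (A2 h) (B h) (S h) $ 1 $ 1) has_vector_derivative
           (of_real (RR1 (Y1 h0) (Y2 h0) (C h0) (B h0) (S h0) y1' y2' c' b' s') + \<i> * of_real (RR2 (Y1 h0) (Y2 h0) (C h0) (B h0) (S h0) y1' y2' c' b' s'))
           * (of_real (cos (PH (B h0) (S h0))) - \<i> * of_real (sin (PH (B h0) (S h0))))) (at h0)"
    unfolding e11
    apply (rule has_vector_derivative_eq_rhs)
     apply (rule derivative_eq_intros dT dS dP d3 refl | simp)+
    apply (simp add: complex_eq_iff RR1_def RR2_def T0 S0 P0 algebra_simps)
    done
  show "((\<lambda>h. Gm (Y1 h) (Y2 h) (C h) (A2 h) (B h) (S h) $ 1 $ 2) has_vector_derivative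
           (of_real (RR3 (Y1 h0) (Y2 h0) (C h0) (B h0) (S h0) y1' y2' c' b' s') + \<i> * of_real (RR4 (Y1 h0) (Y2 h0) (C h0) (B h0) (S h0) y1' y2' c' b' s'))
           * (of_real (cos (PH (B h0) (S h0))) + \<i> * of_real (sin (PH (B h0) (S h0))))) (at h0)"
    unfolding e12
    apply (rule has_vector_derivative_eq_rhs)
     apply (rule derivative_eq_intros dT dS dP d1 d2 refl | simp)+
    apply (simp add: complex_eq_iff RR3_def RR4_def T0 S0 P0 algebra_simps)
    done
  show "((\<lambda>h. Gm (Y1 h) (Y2 h) (C h) (A2 h) (B h) (S h) $ 2 $ 1) has_vector_derivative
           (- of_real (RR3 (Y1 h0) (Y2 h0) (C h0) (B h0) (S h0) y1' y2' c' b' s') + \<i> * of_real (RR4 (Y1 h0) (Y2 h0) (C h0) (B h0) (S h0) y1' y2' c' b' s'))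
           * (of_real (cos (PH (B h0) (S h0))) - \<i> * of_real (sin (PH (B h0) (S h0))))) (at h0)"
    unfolding e21
    apply (rule has_vector_derivative_eq_rhs)
     apply (rule derivative_eq_intros dT dS dP d1 d2 refl | simp)+
    apply (simp add: complex_eq_iff RR3_def RR4_def T0 S0 P0 algebra_simps)
    done
  show "((\<lambda>h. Gm (Y1 h) (Y2 h) (C h) (A2 h) (B h) (S h) $ 2 $ 2) has_vector_derivative
           (of_real (RR1 (Y1 h0) (Y2 h0) (C h0) (B h0) (S h0) y1' y2' c' b' s') - \<i> * of_real (RR2 (Y1 h0) (Y2 h0) (C h0) (B h0) (S h0) y1' y2' c' b' s'))
           * (of_real (cos (PH (B h0) (S h0))) + \<i> * of_real (sin (PH (B h0) (S h0))))) (at h0)"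
    unfolding e22
    apply (rule has_vector_derivative_eq_rhs)
     apply (rule derivative_eq_intros dT dS dP d3 refl | simp)+
    apply (simp add: complex_eq_iff RR1_def RR2_def T0 S0 P0 algebra_simps)
    done
  show "((\<lambda>h. Gm (Y1 h) (Y2 h) (C h) (A2 h) (B h) (S h) $ 3 $ 3) has_vector_derivative
           of_real (exp (S h0 * A2 h0) * (s' * A2 h0 + S h0 * a2'))) (at h0)"
    unfolding e33
    apply (rule has_vector_derivative_eq_rhs)
     apply (rule derivative_eq_intros d4 d6 refl | simp)+
    done
qed

lemma cos_sin_not_both_zero: "cos (p::real) \<noteq> 0 \<or> sin p \<noteq> 0"
proof (rule ccontr)
  assume "\<not> (cos p \<noteq> 0 \<or> sin p \<noteq> 0)"
  then have "cos p = 0" "sin p = 0" by auto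
  moreover have "(sin p)^2 + (cos p)^2 = 1" by simp
  ultimately show False by (simp del: sin_cos_squared_add)
qed

lemma cis_like_nz: "complex_of_real (cos p) - \<i> * of_real (sin p) \<noteq> 0" "complex_of_real (cos p) + \<i> * of_real (sin p) \<noteq> 0"
  using cos_sin_not_both_zero[of p] by (auto simp: complex_eq_iff)

lemma prod_zero_iff:
  "(of_real x + \<i> * of_real y) * (complex_of_real (cos p) - \<i> * of_real (sin p)) = 0 \<longleftrightarrow> x = 0 \<and> y = 0"
  "(of_real x + \<i> * of_real y) * (complex_of_real (cos p) + \<i> * of_real (sin p)) = 0 \<longleftrightarrow> x = 0 \<and> y = 0"
  "(of_real x - \<i> * of_real y) * (complex_of_real (cos p) + \<i> * of_real (sin p)) = 0 \<longleftrightarrow> x = 0 \<and> y = 0"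
  "(- of_real x + \<i> * of_real y) * (complex_of_real (cos p) - \<i> * of_real (sin p)) = 0 \<longleftrightarrow> x = 0 \<and> y = 0"
  using cis_like_nz[of p] by (simp_all only: mult_eq_0_iff; auto simp: complex_eq_iff)+

lemma geod_eq_Gf: "y \<in> UU i \<Longrightarrow> (\<lambda>(a, b, s). geod i a b s) y = Gf i y"
  by (cases y) (auto simp: UU_def Gf_def intro!: geod_closed)

lemma Dv_iff:
  assumes D: "((\<lambda>(a, b, s). geod i a b s) has_derivative D) (at (\<alpha>, \<beta>, t))"
    and inU: "(\<alpha>, \<beta>, t) \<in> UU i"
  shows "D (\<xi>, bd, sd) = 0 \<longleftrightarrow>
     RR1 (\<alpha>$1) (\<alpha>$3) (cc i \<alpha> \<beta>) \<beta> t (\<xi>$1) (\<xi>$3) (cc i \<xi> bd) bd sd = 0 \<and>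
     RR2 (\<alpha>$1) (\<alpha>$3) (cc i \<alpha> \<beta>) \<beta> t (\<xi>$1) (\<xi>$3) (cc i \<xi> bd) bd sd = 0 \<and>
     RR3 (\<alpha>$1) (\<alpha>$3) (cc i \<alpha> \<beta>) \<beta> t (\<xi>$1) (\<xi>$3) (cc i \<xi> bd) bd sd = 0 \<and>
     RR4 (\<alpha>$1) (\<alpha>$3) (cc i \<alpha> \<beta>) \<beta> t (\<xi>$1) (\<xi>$3) (cc i \<xi> bd) bd sd = 0 \<and>
     sd * \<alpha>$2 + t * \<xi>$2 = 0"
proof -
  define x0 where "x0 = (\<alpha>, \<beta>, t)"
  define v where "v = (\<xi>, bd, sd)"
  let ?g = "\<lambda>(a, b, s). geod i a b s"
  have l: "((\<lambda>h. x0 + h *\<^sub>R v) has_derivative (\<lambda>h. h *\<^sub>R v)) (at 0)"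
    by (auto intro!: derivative_eq_intros)
  have D0: "(?g has_derivative D) (at (x0 + 0 *\<^sub>R v))" using D by (simp add: x0_def)
  have "((\<lambda>h. ?g (x0 + h *\<^sub>R v)) has_derivative (\<lambda>h. D (h *\<^sub>R v))) (at 0)"
    using has_derivative_compose[OF l D0] by simp
  moreover have "D (h *\<^sub>R v) = h *\<^sub>R D v" for h
    using has_derivative_bounded_linear[OF D] by (simp add: linear_simps)
  ultimately have gv: "((\<lambda>h. ?g (x0 + h *\<^sub>R v)) has_vector_derivative D v) (at 0)"
    by (simp add: has_vector_derivative_def)
  have opn: "open {h::real. x0 + h *\<^sub>R v \<in> UU i}"
    by (rule continuous_open_vimage[OF open_UU, unfolded vimage_def]) (auto intro!: continuous_intros)
  have Gv: "((\<lambda>h. Gf i (x0 + h *\<^sub>R v)) has_vector_derivative D v) (at 0)"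
    by (rule has_vector_derivative_transform_within_open[OF gv opn])
       (auto simp: x0_def inU geod_eq_Gf)
  have ent: "((\<lambda>h. Gf i (x0 + h *\<^sub>R v) $ a $ b) has_vector_derivative D v $ a $ b) (at 0)" for a b
    using bounded_linear.has_vector_derivative[OF bounded_linear_compose[OF bounded_linear_vec_nth bounded_linear_vec_nth] Gv]
    by simp
  have Gline: "Gf i (x0 + h *\<^sub>R v) = Gm (\<alpha>$1 + h * \<xi>$1) (\<alpha>$3 + h * \<xi>$3) (cc i \<alpha> \<beta> + h * cc i \<xi> bd)
        (\<alpha>$2 + h * \<xi>$2) (\<beta> + h * bd) (t + h * sd)" for h
    by (simp add: Gf_def x0_def v_def cc_def algebra_simps)
  have ent': "((\<lambda>h. Gm (\<alpha>$1 + h * \<xi>$1) (\<alpha>$3 + h * \<xi>$3) (cc i \<alpha> \<beta> + h * cc i \<xi> bd)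
        (\<alpha>$2 + h * \<xi>$2) (\<beta> + h * bd) (t + h * sd) $ a $ b) has_vector_derivative D v $ a $ b) (at 0)" for a b
    using ent[of a b] unfolding Gline .
  have dl: "((\<lambda>h. p + h * q) has_real_derivative q) (at 0)" for p q :: real
    by (auto intro!: derivative_eq_intros)
  have pos: "0 < (\<alpha>$1 + 0 * \<xi>$1)^2 + (\<alpha>$3 + 0 * \<xi>$3)^2 + (cc i \<alpha> \<beta> + 0 * cc i \<xi> bd)^2"
    using inU by (simp add: UU_def)
  note GL = Gm_line_deriv[OF dl dl dl dl dl dl pos]
  have z: "((\<lambda>h. Gm (\<alpha>$1 + h * \<xi>$1) (\<alpha>$3 + h * \<xi>$3) (cc i \<alpha> \<beta> + h * cc i \<xi> bd)
        (\<alpha>$2 + h * \<xi>$2) (\<beta> + h * bd) (t + h * sd) $ a $ b) has_vector_derivative 0) (at 0)"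
    if "a = 1 \<and> b = 3 \<or> a = 2 \<and> b = 3 \<or> a = 3 \<and> b = 1 \<or> a = 3 \<and> b = 2" for a b
    using that by (auto simp: Gm_def)
  note v11 = vector_derivative_unique_at[OF ent' GL(1)]
  note v12 = vector_derivative_unique_at[OF ent' GL(2)]
  note v21 = vector_derivative_unique_at[OF ent' GL(3)]
  note v22 = vector_derivative_unique_at[OF ent' GL(4)]
  note v33 = vector_derivative_unique_at[OF ent' GL(5)]
  have v0: "D v $ 1 $ 3 = 0" "D v $ 2 $ 3 = 0" "D v $ 3 $ 1 = 0" "D v $ 3 $ 2 = 0"
    by (rule vector_derivative_unique_at[OF ent' z]; simp)+
  have "D v = 0 \<longleftrightarrow> D v $ 1 $ 1 = 0 \<and> D v $ 1 $ 2 = 0 \<and> D v $ 2 $ 1 = 0 \<and> D v $ 2 $ 2 = 0 \<and> D v $ 3 $ 3 = 0"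
    using v0 by (auto simp: vec_eq_iff forall_3)
  moreover have "D v $ 1 $ 1 = 0 \<longleftrightarrow> RR1 (\<alpha>$1) (\<alpha>$3) (cc i \<alpha> \<beta>) \<beta> t (\<xi>$1) (\<xi>$3) (cc i \<xi> bd) bd sd = 0 \<and>
     RR2 (\<alpha>$1) (\<alpha>$3) (cc i \<alpha> \<beta>) \<beta> t (\<xi>$1) (\<xi>$3) (cc i \<xi> bd) bd sd = 0"
    unfolding v11 prod_zero_iff by simp
  moreover have "D v $ 2 $ 2 = 0 \<longleftrightarrow> RR1 (\<alpha>$1) (\<alpha>$3) (cc i \<alpha> \<beta>) \<beta> t (\<xi>$1) (\<xi>$3) (cc i \<xi> bd) bd sd = 0 \<and>
     RR2 (\<alpha>$1) (\<alpha>$3) (cc i \<alpha> \<beta>) \<beta> t (\<xi>$1) (\<xi>$3) (cc i \<xi> bd) bd sd = 0"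
    unfolding v22 prod_zero_iff by simp
  moreover have "D v $ 1 $ 2 = 0 \<longleftrightarrow> RR3 (\<alpha>$1) (\<alpha>$3) (cc i \<alpha> \<beta>) \<beta> t (\<xi>$1) (\<xi>$3) (cc i \<xi> bd) bd sd = 0 \<and>
     RR4 (\<alpha>$1) (\<alpha>$3) (cc i \<alpha> \<beta>) \<beta> t (\<xi>$1) (\<xi>$3) (cc i \<xi> bd) bd sd = 0"
    unfolding v12 prod_zero_iff by simp
  moreover have "D v $ 2 $ 1 = 0 \<longleftrightarrow> RR3 (\<alpha>$1) (\<alpha>$3) (cc i \<alpha> \<beta>) \<beta> t (\<xi>$1) (\<xi>$3) (cc i \<xi> bd) bd sd = 0 \<and>
     RR4 (\<alpha>$1) (\<alpha>$3) (cc i \<alpha> \<beta>) \<beta> t (\<xi>$1) (\<xi>$3) (cc i \<xi> bd) bd sd = 0"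
    unfolding v21 prod_zero_iff by simp
  moreover have "D v $ 3 $ 3 = 0 \<longleftrightarrow> sd * \<alpha>$2 + t * \<xi>$2 = 0"
    unfolding v33 of_real_eq_0_iff by simp
  ultimately show ?thesis
    unfolding v_def[symmetric] by blast
qed

lemma alg_forward:
  fixes a1 a2 a3 x1 x2 x3 \<beta> t bd sd c c' k :: real
  assumes nrm: "a1^2 + a2^2 + a3^2 = 1" and q: "0 < a1^2 + a3^2" and t: "0 < t"
    and c: "c = \<beta> - k * a2" and c': "c' = bd - k * x2"
    and T: "a1 * x1 + a2 * x2 + a3 * x3 = 0"
    and R1: "RR1 a1 a3 c \<beta> t x1 x3 c' bd sd = 0"
    and R2: "RR2 a1 a3 c \<beta> t x1 x3 c' bd sd = 0"
    and R3: "RR3 a1 a3 c \<beta> t x1 x3 c' bd sd = 0"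
    and R4: "RR4 a1 a3 c \<beta> t x1 x3 c' bd sd = 0"
    and R5: "sd * a2 + t * x2 = 0"
    and sn: "sin (TH a1 a3 c t) \<noteq> 0"
    and tn: "sin (TH a1 a3 c t) - TH a1 a3 c t * cos (TH a1 a3 c t) \<noteq> 0"
  shows "x1 = 0 \<and> x2 = 0 \<and> x3 = 0 \<and> bd = 0 \<and> sd = 0"
proof -
  define W where "W = WW a1 a3 c"
  define th where "th = TH a1 a3 c t"
  define S where "S = SS a1 a3 c t"
  define wd where "wd = WD a1 a3 c x1 x3 c'"
  define thd where "thd = THD a1 a3 c t x1 x3 c' sd"
  define sdd where "sdd = SD a1 a3 c t x1 x3 c' sd"
  define phd where "phd = PHD \<beta> t bd sd"
  have Wpos: "0 < W" using q by (simp add: W_def WW_def add_pos_nonneg)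
  have W2: "W * W = a1 * a1 + a3 * a3 + c * c"
    using q by (simp add: W_def WW_def power2_eq_square[symmetric] add_nonneg_nonneg)
  have th_eq: "th = W * t / 2" by (simp add: th_def TH_def W_def)
  have S_eq: "sin th = W * S" using Wpos by (simp add: S_def SS_def th_def W_def)
  have WD_eq: "W * wd = a1 * x1 + a3 * x3 + c * c'" using Wpos by (simp add: wd_def WD_def W_def)
  have THD_eq: "2 * thd = wd * t + W * sd" by (simp add: thd_def THD_def wd_def W_def)
  have SD_eq: "sdd * (W * W) = cos th * thd * W - sin th * wd"
    using Wpos by (simp add: sdd_def SD_def th_def thd_def wd_def W_def power2_eq_square TH_def WW_def)
  have PHD_eq: "2 * phd = sd * \<beta> + t * bd" by (simp add: phd_def PHD_def)
  have r1: "- sin th * thd + c * S * phd = 0"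
    using R1 by (simp add: RR1_def th_def S_def thd_def phd_def)
  have r2: "c' * S + c * sdd - cos th * phd = 0"
    using R2 by (simp add: RR2_def th_def S_def sdd_def phd_def)
  have r3: "sdd * a1 + S * x1 - S * a3 * phd = 0"
    using R3 by (simp add: RR3_def S_def sdd_def phd_def)
  have r4: "sdd * a3 + S * x3 + S * a1 * phd = 0"
    using R4 by (simp add: RR4_def S_def sdd_def phd_def)
  have Snz: "S \<noteq> 0" using sn S_eq by (auto simp: th_def)
  have tnz: "S * 2 - cos th * t \<noteq> 0"
  proof
    assume "S * 2 - cos th * t = 0"
    then have "W * S * 2 - cos th * (W * t) = 0" by (metis mult.assoc mult.left_commute mult_zero_right right_diff_distrib)
    then have "sin th - th * cos th = 0" unfolding S_eq[symmetric] th_eq by (simp add: algebra_simps)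
    then show False using tn by (simp add: th_def)
  qed
  have s1: "W * thd = c * phd"
  proof -
    have "S * (c * phd - W * thd) = 0" using r1 unfolding S_eq by (simp add: algebra_simps)
    then show ?thesis using Snz by simp
  qed
  have sd0: "sd = 0"
  proof -
    have "sd * 1 = 0"
    proof -
      have "sd * (a2^2 + k * c * a2 + W * W - c * \<beta>) = 0"
        using s1 THD_eq PHD_eq WD_eq T R5 c' t by algebra
      moreover have "a2^2 + k * c * a2 + W * W - c * \<beta> = 1"
        using W2 c nrm by algebra
      ultimately show ?thesis by simp
    qed
    then show ?thesis by simp
  qed
  have x20: "x2 = 0" using R5 sd0 t by simp
  have P0: "a1 * x1 + a3 * x3 = 0" using T x20 by simp
  have sdd0: "sdd = 0"
  proof -
    have "sdd * (a1^2 + a3^2) = 0" using r3 r4 P0 by algebra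
    then show ?thesis using q by (metis less_irrefl mult_eq_0_iff)
  qed
  have wd0: "wd = 0"
  proof -
    have "wd * (W * (S * 2 - cos th * t)) = 0"
      using SD_eq sdd0 THD_eq sd0 S_eq by algebra
    then show ?thesis using Wpos tnz by simp
  qed
  have bd0: "bd = 0"
  proof -
    have "bd * (S * 2 - cos th * t) = 0"
      using r2 sdd0 PHD_eq sd0 c' x20 by algebra
    then show ?thesis using tnz by simp
  qed
  have phd0: "phd = 0" using PHD_eq sd0 bd0 by simp
  have x10: "x1 = 0" using r3 sdd0 phd0 Snz by simp
  have x30: "x3 = 0" using r4 sdd0 phd0 Snz by simp
  show ?thesis using x10 x20 x30 bd0 sd0 by simp
qed

lemma alg_backward1:
  fixes a1 a3 c \<beta> t :: real
  assumes q: "0 < a1^2 + a3^2" and sn: "sin (TH a1 a3 c t) = 0"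
  shows "RR1 a1 a3 c \<beta> t (- a3) a1 0 0 0 = 0 \<and> RR2 a1 a3 c \<beta> t (- a3) a1 0 0 0 = 0 \<and>
         RR3 a1 a3 c \<beta> t (- a3) a1 0 0 0 = 0 \<and> RR4 a1 a3 c \<beta> t (- a3) a1 0 0 0 = 0"
proof -
  have S0: "SS a1 a3 c t = 0" using sn by (simp add: SS_def)
  have WD0: "WD a1 a3 c (- a3) a1 0 = 0" by (simp add: WD_def algebra_simps)
  have THD0: "THD a1 a3 c t (- a3) a1 0 0 = 0" by (simp add: THD_def WD0)
  have SD0: "SD a1 a3 c t (- a3) a1 0 0 = 0" by (simp add: SD_def THD0 WD0)
  have PHD0: "PHD \<beta> t 0 0 = 0" by (simp add: PHD_def)
  show ?thesis by (simp add: RR1_def RR2_def RR3_def RR4_def S0 THD0 SD0 PHD0)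
qed

lemma alg_backward2:
  fixes a1 a3 c \<beta> t :: real
  assumes q: "0 < a1^2 + a3^2" and tn: "sin (TH a1 a3 c t) - TH a1 a3 c t * cos (TH a1 a3 c t) = 0"
  shows "RR1 a1 a3 c \<beta> t (t * a3 / 2) (- (t * a1 / 2)) 1 1 0 = 0 \<and> RR2 a1 a3 c \<beta> t (t * a3 / 2) (- (t * a1 / 2)) 1 1 0 = 0 \<and>
         RR3 a1 a3 c \<beta> t (t * a3 / 2) (- (t * a1 / 2)) 1 1 0 = 0 \<and> RR4 a1 a3 c \<beta> t (t * a3 / 2) (- (t * a1 / 2)) 1 1 0 = 0"
proof -
  define W where "W = WW a1 a3 c"
  define th where "th = TH a1 a3 c t"
  have Wpos: "0 < W" using q by (simp add: W_def WW_def add_pos_nonneg)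
  have th_eq: "th = W * t / 2" by (simp add: th_def TH_def W_def)
  have tn': "sin th = W * t / 2 * cos th" using tn by (simp add: th_def[symmetric] th_eq)
  have S_eq: "SS a1 a3 c t = t / 2 * cos th" using Wpos tn' by (simp add: SS_def th_def[symmetric] W_def[symmetric])
  have WD_eq: "WD a1 a3 c (t * a3 / 2) (- (t * a1 / 2)) 1 = c / W"
    by (simp add: WD_def W_def algebra_simps)
  have THD_eq: "THD a1 a3 c t (t * a3 / 2) (- (t * a1 / 2)) 1 0 = c / W * t / 2"
    by (simp add: THD_def WD_eq)
  have SD0: "SD a1 a3 c t (t * a3 / 2) (- (t * a1 / 2)) 1 0 = 0"
    using Wpos by (simp add: SD_def THD_eq WD_eq th_def[symmetric] W_def[symmetric] tn')
  have PHD_eq: "PHD \<beta> t 1 0 = t / 2" by (simp add: PHD_def)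
  show ?thesis
    unfolding RR1_def RR2_def RR3_def RR4_def S_eq THD_eq SD0 PHD_eq th_def[symmetric]
    using Wpos by (simp add: tn' field_simps)
qed

theorem proposition4:
  fixes i :: nat and \<alpha> :: "real^3" and \<beta> t :: real
  assumes "i \<in> {1, 2}"
    and "norm \<alpha> = 1"
    and "\<alpha>$2 \<noteq> 1" and "\<alpha>$2 \<noteq> -1"
    and "t > 0"
  shows "conjugate_time i \<alpha> \<beta> t \<longleftrightarrow>
    sin (wfreq i \<alpha> \<beta> * t / 2) *
      (sin (wfreq i \<alpha> \<beta> * t / 2) - (wfreq i \<alpha> \<beta> * t / 2) * cos (wfreq i \<alpha> \<beta> * t / 2)) = 0"
proof -
  have "\<alpha> \<bullet> \<alpha> = 1" using assms(2) by (simp add: power2_norm_eq_inner[symmetric])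
  then have nrm: "(\<alpha>$1)^2 + (\<alpha>$2)^2 + (\<alpha>$3)^2 = 1"
    by (simp add: inner_vec_def sum_3 power2_eq_square)
  have "(\<alpha>$2)^2 \<noteq> 1" using assms(3,4) by (simp add: power2_eq_1_iff)
  then have q: "0 < (\<alpha>$1)^2 + (\<alpha>$3)^2"
    using nrm by (smt (verit) zero_le_power2)
  define k where "k = (if i = 1 then 1 else 0 :: real)"
  have cc_eq: "cc i a b = b - k * a$2" for a b by (simp add: cc_def k_def)
  define c where "c = cc i \<alpha> \<beta>"
  have w: "wfreq i \<alpha> \<beta> = WW (\<alpha>$1) (\<alpha>$3) c"
  proof -
    have e: "1 - (\<alpha>$2)^2 = (\<alpha>$1)^2 + (\<alpha>$3)^2" using nrm by simp
    show ?thesis using assms(1) by (auto simp: wfreq_def WW_def c_def cc_def e)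
  qed
  have inU: "(\<alpha>, \<beta>, t) \<in> UU i"
    using q assms(5) by (simp add: UU_def add_pos_nonneg c_def[symmetric])
  obtain D1 where D1: "(Gf i has_derivative D1) (at (\<alpha>, \<beta>, t))" using Gf_deriv[OF inU] by blast
  have D0: "((\<lambda>(a, b, s). geod i a b s) has_derivative D1) (at (\<alpha>, \<beta>, t))"
    by (rule has_derivative_transform_within_open[OF D1 open_UU inU]) (simp add: geod_eq_Gf)
  let ?R = "\<lambda>\<xi> bd sd. RR1 (\<alpha>$1) (\<alpha>$3) c \<beta> t (\<xi>$1) (\<xi>$3) (bd - k * \<xi>$2) bd sd = 0 \<and>
     RR2 (\<alpha>$1) (\<alpha>$3) c \<beta> t (\<xi>$1) (\<xi>$3) (bd - k * \<xi>$2) bd sd = 0 \<and>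
     RR3 (\<alpha>$1) (\<alpha>$3) c \<beta> t (\<xi>$1) (\<xi>$3) (bd - k * \<xi>$2) bd sd = 0 \<and>
     RR4 (\<alpha>$1) (\<alpha>$3) c \<beta> t (\<xi>$1) (\<xi>$3) (bd - k * \<xi>$2) bd sd = 0 \<and>
     sd * \<alpha>$2 + t * \<xi>$2 = 0"
  have key: "conjugate_time i \<alpha> \<beta> t \<longleftrightarrow> (\<exists>\<xi> bd sd. \<xi> \<bullet> \<alpha> = 0 \<and> (\<xi>, bd, sd) \<noteq> 0 \<and> ?R \<xi> bd sd)"
  proof
    assume "conjugate_time i \<alpha> \<beta> t"
    then obtain D \<xi> bd sd where D: "((\<lambda>(a, b, s). geod i a b s) has_derivative D) (at (\<alpha>, \<beta>, t))"
      and \<xi>: "\<xi> \<bullet> \<alpha> = 0" "(\<xi>, bd, sd) \<noteq> 0" "D (\<xi>, bd, sd) = 0"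
      unfolding conjugate_time_def by blast
    show "\<exists>\<xi> bd sd. \<xi> \<bullet> \<alpha> = 0 \<and> (\<xi>, bd, sd) \<noteq> 0 \<and> ?R \<xi> bd sd"
      using \<xi> Dv_iff[OF D inU, of \<xi> bd sd] by (auto simp: cc_eq c_def)
  next
    assume "\<exists>\<xi> bd sd. \<xi> \<bullet> \<alpha> = 0 \<and> (\<xi>, bd, sd) \<noteq> 0 \<and> ?R \<xi> bd sd"
    then obtain \<xi> bd sd where \<xi>: "\<xi> \<bullet> \<alpha> = 0" "(\<xi>, bd, sd) \<noteq> 0" "?R \<xi> bd sd" by blast
    have "D1 (\<xi>, bd, sd) = 0" using \<xi>(3) Dv_iff[OF D0 inU, of \<xi> bd sd] by (simp add: cc_eq c_def)
    then show "conjugate_time i \<alpha> \<beta> t" unfolding conjugate_time_def using D0 \<xi>(1,2) by blast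
  qed
  define th where "th = TH (\<alpha>$1) (\<alpha>$3) c t"
  have thw: "wfreq i \<alpha> \<beta> * t / 2 = th" by (simp add: w th_def TH_def)
  have "(\<exists>\<xi> bd sd. \<xi> \<bullet> \<alpha> = 0 \<and> (\<xi>, bd, sd) \<noteq> 0 \<and> ?R \<xi> bd sd) \<longleftrightarrow> sin th * (sin th - th * cos th) = 0"
  proof
    assume "\<exists>\<xi> bd sd. \<xi> \<bullet> \<alpha> = 0 \<and> (\<xi>, bd, sd) \<noteq> 0 \<and> ?R \<xi> bd sd"
    then obtain \<xi> bd sd where \<xi>: "\<xi> \<bullet> \<alpha> = 0" "(\<xi>, bd, sd) \<noteq> 0" "?R \<xi> bd sd" by blast
    show "sin th * (sin th - th * cos th) = 0"
    proof (rule ccontr)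
      assume "sin th * (sin th - th * cos th) \<noteq> 0"
      then have sn: "sin th \<noteq> 0" and tn: "sin th - th * cos th \<noteq> 0" by auto
      have T: "\<alpha>$1 * \<xi>$1 + \<alpha>$2 * \<xi>$2 + \<alpha>$3 * \<xi>$3 = 0"
        using \<xi>(1) by (simp add: inner_vec_def sum_3 mult.commute)
      have cdef: "c = \<beta> - k * \<alpha>$2" by (simp add: c_def cc_eq)
      have "\<xi>$1 = 0 \<and> \<xi>$2 = 0 \<and> \<xi>$3 = 0 \<and> bd = 0 \<and> sd = 0"
        using \<xi>(3) sn tn unfolding th_def
        by (intro alg_forward[OF nrm q assms(5) cdef refl T]) auto
      then have "(\<xi>, bd, sd) = 0" by (simp add: vec_eq_iff forall_3 zero_prod_def)
      then show False using \<xi>(2) by simp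
    qed
  next
    assume "sin th * (sin th - th * cos th) = 0"
    then consider "sin th = 0" | "sin th - th * cos th = 0" by auto
    then show "\<exists>\<xi> bd sd. \<xi> \<bullet> \<alpha> = 0 \<and> (\<xi>, bd, sd) \<noteq> 0 \<and> ?R \<xi> bd sd"
    proof cases
      case 1
      define \<xi> :: "real^3" where "\<xi> = vector [- \<alpha>$3, 0, \<alpha>$1]"
      have x: "\<xi>$1 = - \<alpha>$3" "\<xi>$2 = 0" "\<xi>$3 = \<alpha>$1" by (simp_all add: \<xi>_def)
      have "\<xi> \<noteq> 0"
      proof
        assume "\<xi> = 0"
        then have "\<alpha>$1 = 0" "\<alpha>$3 = 0" using x by auto
        then show False using q by simp
      qed
      moreover have "\<xi> \<bullet> \<alpha> = 0" by (simp add: inner_vec_def sum_3 x)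
      moreover have "?R \<xi> 0 0"
        using alg_backward1[OF q, of c t \<beta>] 1 by (simp add: x th_def)
      ultimately show ?thesis by (intro exI[of _ \<xi>] exI[of _ 0]) (auto simp: zero_prod_def)
    next
      case 2
      define \<xi> :: "real^3" where "\<xi> = vector [t * \<alpha>$3 / 2, 0, - (t * \<alpha>$1 / 2)]"
      have x: "\<xi>$1 = t * \<alpha>$3 / 2" "\<xi>$2 = 0" "\<xi>$3 = - (t * \<alpha>$1 / 2)" by (simp_all add: \<xi>_def)
      have "\<xi> \<bullet> \<alpha> = 0" by (simp add: inner_vec_def sum_3 x algebra_simps)
      moreover have "?R \<xi> 1 0"
        using alg_backward2[OF q, of c t \<beta>] 2 by (simp add: x th_def)
      ultimately show ?thesis by (intro exI[of _ \<xi>] exI[of _ 1] exI[of _ 0]) (auto simp: zero_prod_def)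
    qed
  qed
  then show ?thesis unfolding key thw .
qed

end
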